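(* Let $x_k>0$ be the reactance of a transmission line $k$, and let $0\le x_{k,V}^{\min}\le x_{k,V}^{\max}$ be the minimum and maximum reactance of a continuously variable series reactor (CVSR) that may be installed on line $k$. Define $b_k=1/x_k$, $$b_{k,V}^{\min}=-\frac{x_{k,V}^{\max}}{x_k(x_k+x_{k,V}^{\max})},\qquad b_{k,V}^{\max}=-\frac{x_{k,V}^{\min}}{x_k(x_k+x_{k,V}^{\min})},$$ let $\theta_k^{\max}>0$, and set $M_k=|b_{k,V}^{\min}\theta_k^{\max}|$. Let $P_k\in\mathbb{R}$, $\theta_k\in\mathbb{R}$ with $|\theta_k|\le\theta_k^{\max}$, and $\delta_k\in\{0,1\}$. Then the following are equivalent: (i) (nonlinear DC power flow with CVSR) there exists $b_k^V$ with $b_{k,V}^{\min}\le b_k^V\le b_{k,V}^{\max}$ such that $P_k=(b_k+\delta_k b_k^V)\theta_k$; (ii) (mixed integer linear reformulation) there exist $w_k,z_k\in\mathbb{R}$ and $y_k\in\{0,1\}$ such that $P_k=b_k\theta_k+w_k$, $-\delta_k\theta_k^{\max}\le z_k\le\delta_k\theta_k^{\max}$, $\theta_k-(1-\delta_k)\theta_k^{\max}\le z_k\le\theta_k+(1-\delta_k)\theta_k^{\max}$, $-M_ky_k+z_kb_{k,V}^{\min}\le w_k\le z_kb_{k,V}^{\max}+M_ky_k$, and $-M_k(1-y_k)+z_kb_{k,V}^{\max}\le w_k\le z_kb_{k,V}^{\min}+M_k(1-y_k)$.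
   Context: In the DC power flow model, a CVSR inserted in series on line $k$ adds a reactance $x_k^V\in[x_{k,V}^{\min},x_{k,V}^{\max}]$, so the line's susceptance becomes $-1/(x_k+x_k^V)=-(b_k+b_k^V)$ with $b_k=1/x_k$ and $b_k^V=-x_k^V/(x_k(x_k+x_k^V))$; the stated $b_{k,V}^{\min},b_{k,V}^{\max}$ are the resulting bounds on $b_k^V$. The binary $\delta_k=1$ means a CVSR is installed on line $k$, $\theta_k$ is the voltage angle difference across line $k$, and $P_k$ is the active power flow on line $k$. *)

theory Defs
  imports Complex_Main
begin

definition line_b :: "real \<Rightarrow> real" where
  "line_b x = 1 / x"

definition cvsr_bmin :: "real \<Rightarrow> real \<Rightarrow> real" where
  "cvsr_bmin x xVmax = - (xVmax / (x * (x + xVmax)))"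

definition cvsr_bmax :: "real \<Rightarrow> real \<Rightarrow> real" where
  "cvsr_bmax x xVmin = - (xVmin / (x * (x + xVmin)))"

definition bigM :: "real \<Rightarrow> real \<Rightarrow> real \<Rightarrow> real" where
  "bigM x xVmax thmax = \<bar>cvsr_bmin x xVmax * thmax\<bar>"

end

theory Submission
  imports Defs
begin

lemma bmin_le_bmax:
  assumes "x > 0" "0 \<le> s" "s \<le> t"
  shows "cvsr_bmin x t \<le> cvsr_bmax x s" "cvsr_bmax x s \<le> 0"
proof -
  have "s * (x * (x + t)) \<le> t * (x * (x + s))"
  proof -
    have "s * (x * (x + t)) - t * (x * (x + s)) = x * x * (s - t)" by (simp add: algebra_simps)
    also have "\<dots> \<le> 0" using assms by (simp add: mult_nonneg_nonpos)
    finally show ?thesis by simp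
  qed
  then have "s / (x * (x + s)) \<le> t / (x * (x + t))"
    using assms by (simp add: divide_simps)
  then show "cvsr_bmin x t \<le> cvsr_bmax x s" unfolding cvsr_bmin_def cvsr_bmax_def by simp
  show "cvsr_bmax x s \<le> 0" unfolding cvsr_bmax_def using assms by simp
qed

lemma core:
  fixes a c M th thmax w :: real
  assumes ac: "a \<le> c" and c0: "c \<le> 0" and M: "M = - a * thmax"
    and th: "\<bar>th\<bar> \<le> thmax"
  shows "(\<exists>bV. a \<le> bV \<and> bV \<le> c \<and> w = bV * th) \<longleftrightarrow>
     (\<exists>y::real. (y = 0 \<or> y = 1)
        \<and> - M * y + th * a \<le> w
        \<and> w \<le> th * c + M * y
        \<and> - M * (1 - y) + th * c \<le> w
        \<and> w \<le> th * a + M * (1 - y))"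
proof
  assume "\<exists>bV. a \<le> bV \<and> bV \<le> c \<and> w = bV * th"
  then obtain bV where b: "a \<le> bV" "bV \<le> c" "w = bV * th" by blast
  show "\<exists>y::real. (y = 0 \<or> y = 1)
        \<and> - M * y + th * a \<le> w
        \<and> w \<le> th * c + M * y
        \<and> - M * (1 - y) + th * c \<le> w
        \<and> w \<le> th * a + M * (1 - y)"
  proof (cases "th \<ge> 0")
    case True
    have 1: "th * a \<le> w" "w \<le> th * c" using b True mult_right_mono[of a bV th] mult_right_mono[of bV c th] by (auto simp: mult.commute)
    have 2: "th * c \<le> 0" using True c0 by (simp add: mult_nonneg_nonpos)
    have 3: "0 \<le> a * (th - thmax)" using th ac c0 by (intro mult_nonpos_nonpos) auto
    have 4: "0 \<le> th * (a - c) - a * thmax"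
    proof -
      have "thmax * (a - c) \<le> th * (a - c)" using th ac by (intro mult_right_mono_neg) auto
      moreover have "0 \<le> - c * thmax" using c0 th by (simp add: mult_nonpos_nonneg)
      ultimately show ?thesis by (simp add: algebra_simps)
    qed
    show ?thesis
      by (rule exI[of _ 0]) (use 1 2 3 4 M in \<open>auto simp: algebra_simps\<close>)
  next
    case False
    have 1: "th * c \<le> w" "w \<le> th * a" using b False mult_right_mono_neg[of a bV th] mult_right_mono_neg[of bV c th] by (auto simp: mult.commute)
    have 2: "0 \<le> th * a" using False ac c0 by (simp add: mult_nonpos_nonpos)
    have 3: "0 \<le> - c * (th + thmax)" using th ac c0 by (intro mult_nonneg_nonneg) auto
    have 4: "0 \<le> th * (c - a) - a * thmax"
    proof -
      have "-thmax * (c - a) \<le> th * (c - a)" using th ac by (intro mult_right_mono) auto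
      moreover have "0 \<le> - c * thmax" using c0 th by (simp add: mult_nonpos_nonneg)
      ultimately show ?thesis by (simp add: algebra_simps)
    qed
    show ?thesis
      by (rule exI[of _ 1]) (use 1 2 3 4 M in \<open>auto simp: algebra_simps\<close>)
  qed
next
  assume "\<exists>y::real. (y = 0 \<or> y = 1)
        \<and> - M * y + th * a \<le> w
        \<and> w \<le> th * c + M * y
        \<and> - M * (1 - y) + th * c \<le> w
        \<and> w \<le> th * a + M * (1 - y)"
  then obtain y where y: "y = 0 \<or> y = 1" "- M * y + th * a \<le> w"
        "w \<le> th * c + M * y" "- M * (1 - y) + th * c \<le> w"
        "w \<le> th * a + M * (1 - y)" by blast
  show "\<exists>bV. a \<le> bV \<and> bV \<le> c \<and> w = bV * th"
  proof (cases "th = 0")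
    case True
    have "w = 0"
      using y True by auto
    then show ?thesis using True ac by auto
  next
    case False
    from y(1) consider "th * a \<le> w \<and> w \<le> th * c" | "th * c \<le> w \<and> w \<le> th * a"
      using y by auto
    then have "a \<le> w / th \<and> w / th \<le> c"
    proof cases
      case 1
      show ?thesis
      proof (cases "th > 0")
        case True then show ?thesis using 1 by (simp add: divide_simps mult.commute)
      next
        case f: False
        then have "th < 0" using False by simp
        then have "c \<le> a" using 1 by (smt (verit) mult_le_cancel_left)
        then have "a = c" "w = th * a" using ac 1 by auto
        then show ?thesis using False by simp
      qed
    next
      case 2
      show ?thesis
      proof (cases "th < 0")
        case True then show ?thesis using 2 by (simp add: divide_simps mult.commute)
      next
        case f: False
        then have "th > 0" using False by simp
        then have "c \<le> a" using 2 by (smt (verit) mult_le_cancel_left)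
        then have "a = c" "w = th * a" using ac 2 by auto
        then show ?thesis using False by simp
      qed
    qed
    then show ?thesis using False by (intro exI[of _ "w / th"]) auto
  qed
qed

theorem mainTheorem1:
  fixes x xVmin xVmax thmax P theta delta :: real
  assumes "x > 0"
    and "0 \<le> xVmin" and "xVmin \<le> xVmax"
    and "thmax > 0"
    and "\<bar>theta\<bar> \<le> thmax"
    and "delta = 0 \<or> delta = 1"
  shows "(\<exists>bV. cvsr_bmin x xVmax \<le> bV \<and> bV \<le> cvsr_bmax x xVmin
              \<and> P = (line_b x + delta * bV) * theta)
     \<longleftrightarrow>
     (\<exists>w z y :: real. (y = 0 \<or> y = 1)
        \<and> P = line_b x * theta + w
        \<and> - delta * thmax \<le> z \<and> z \<le> delta * thmax
        \<and> theta - (1 - delta) * thmax \<le> z \<and> z \<le> theta + (1 - delta) * thmax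
        \<and> - bigM x xVmax thmax * y + z * cvsr_bmin x xVmax \<le> w
        \<and> w \<le> z * cvsr_bmax x xVmin + bigM x xVmax thmax * y
        \<and> - bigM x xVmax thmax * (1 - y) + z * cvsr_bmax x xVmin \<le> w
        \<and> w \<le> z * cvsr_bmin x xVmax + bigM x xVmax thmax * (1 - y))"
proof -
  define a where "a = cvsr_bmin x xVmax"
  define c where "c = cvsr_bmax x xVmin"
  define M where "M = bigM x xVmax thmax"
  have ac: "a \<le> c" and c0: "c \<le> 0" using bmin_le_bmax assms unfolding a_def c_def by auto
  have M: "M = - a * thmax" using ac c0 assms unfolding M_def bigM_def a_def[symmetric]
    by (simp add: abs_mult abs_of_nonpos)
  have M0: "M \<ge> 0" using M ac c0 assms by (simp add: mult_nonpos_nonneg)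
  show ?thesis unfolding a_def[symmetric] c_def[symmetric] M_def[symmetric]
  proof (cases "delta = 0")
    case True
    show "(\<exists>bV. a \<le> bV \<and> bV \<le> c \<and> P = (line_b x + delta * bV) * theta) =
    (\<exists>w z y. (y = 0 \<or> y = 1) \<and> P = line_b x * theta + w \<and>
      - delta * thmax \<le> z \<and> z \<le> delta * thmax \<and>
      theta - (1 - delta) * thmax \<le> z \<and> z \<le> theta + (1 - delta) * thmax \<and>
      - M * y + z * a \<le> w \<and> w \<le> z * c + M * y \<and>
      - M * (1 - y) + z * c \<le> w \<and> w \<le> z * a + M * (1 - y))"
    proof
      assume "\<exists>bV. a \<le> bV \<and> bV \<le> c \<and> P = (line_b x + delta * bV) * theta"
      then show "\<exists>w z y. (y = 0 \<or> y = 1) \<and> P = line_b x * theta + w \<and>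
      - delta * thmax \<le> z \<and> z \<le> delta * thmax \<and>
      theta - (1 - delta) * thmax \<le> z \<and> z \<le> theta + (1 - delta) * thmax \<and>
      - M * y + z * a \<le> w \<and> w \<le> z * c + M * y \<and>
      - M * (1 - y) + z * c \<le> w \<and> w \<le> z * a + M * (1 - y)"
        using True M0 assms by (intro exI[of _ 0] exI[of _ 0] exI[of _ 0]) auto
    next
      assume "\<exists>w z y. (y = 0 \<or> y = 1) \<and> P = line_b x * theta + w \<and>
      - delta * thmax \<le> z \<and> z \<le> delta * thmax \<and>
      theta - (1 - delta) * thmax \<le> z \<and> z \<le> theta + (1 - delta) * thmax \<and>
      - M * y + z * a \<le> w \<and> w \<le> z * c + M * y \<and>
      - M * (1 - y) + z * c \<le> w \<and> w \<le> z * a + M * (1 - y)"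
      then obtain w y where "y = 0 \<or> y = 1" "P = line_b x * theta + w"
        "- M * y \<le> w" "w \<le> M * y" "- M * (1 - y) \<le> w" "w \<le> M * (1 - y)"
        using True by force
      then have "P = line_b x * theta" by auto
      then show "\<exists>bV. a \<le> bV \<and> bV \<le> c \<and> P = (line_b x + delta * bV) * theta"
        using True ac by auto
    qed
  next
    case False
    then have d1: "delta = 1" using assms by auto
    have core': "(\<exists>bV. a \<le> bV \<and> bV \<le> c \<and> P - line_b x * theta = bV * theta) \<longleftrightarrow>
     (\<exists>y::real. (y = 0 \<or> y = 1)
        \<and> - M * y + theta * a \<le> P - line_b x * theta
        \<and> P - line_b x * theta \<le> theta * c + M * y
        \<and> - M * (1 - y) + theta * c \<le> P - line_b x * theta
        \<and> P - line_b x * theta \<le> theta * a + M * (1 - y))"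
      by (rule core[OF ac c0 M assms(5)])
    show "(\<exists>bV. a \<le> bV \<and> bV \<le> c \<and> P = (line_b x + delta * bV) * theta) =
    (\<exists>w z y. (y = 0 \<or> y = 1) \<and> P = line_b x * theta + w \<and>
      - delta * thmax \<le> z \<and> z \<le> delta * thmax \<and>
      theta - (1 - delta) * thmax \<le> z \<and> z \<le> theta + (1 - delta) * thmax \<and>
      - M * y + z * a \<le> w \<and> w \<le> z * c + M * y \<and>
      - M * (1 - y) + z * c \<le> w \<and> w \<le> z * a + M * (1 - y))"
    proof
      assume "\<exists>bV. a \<le> bV \<and> bV \<le> c \<and> P = (line_b x + delta * bV) * theta"
      then have "\<exists>bV. a \<le> bV \<and> bV \<le> c \<and> P - line_b x * theta = bV * theta"
        using d1 by (auto simp: algebra_simps)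
      then obtain y where y: "(y = 0 \<or> y = 1)
        \<and> - M * y + theta * a \<le> P - line_b x * theta
        \<and> P - line_b x * theta \<le> theta * c + M * y
        \<and> - M * (1 - y) + theta * c \<le> P - line_b x * theta
        \<and> P - line_b x * theta \<le> theta * a + M * (1 - y)" using core' by blast
      show "\<exists>w z y. (y = 0 \<or> y = 1) \<and> P = line_b x * theta + w \<and>
      - delta * thmax \<le> z \<and> z \<le> delta * thmax \<and>
      theta - (1 - delta) * thmax \<le> z \<and> z \<le> theta + (1 - delta) * thmax \<and>
      - M * y + z * a \<le> w \<and> w \<le> z * c + M * y \<and>
      - M * (1 - y) + z * c \<le> w \<and> w \<le> z * a + M * (1 - y)"
        apply (rule exI[of _ "P - line_b x * theta"], rule exI[of _ theta], rule exI[of _ y])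
        using y d1 assms(5) by (auto simp: mult.commute)
    next
      assume "\<exists>w z y. (y = 0 \<or> y = 1) \<and> P = line_b x * theta + w \<and>
      - delta * thmax \<le> z \<and> z \<le> delta * thmax \<and>
      theta - (1 - delta) * thmax \<le> z \<and> z \<le> theta + (1 - delta) * thmax \<and>
      - M * y + z * a \<le> w \<and> w \<le> z * c + M * y \<and>
      - M * (1 - y) + z * c \<le> w \<and> w \<le> z * a + M * (1 - y)"
      then obtain w z y where h: "(y = 0 \<or> y = 1)" "P = line_b x * theta + w"
      "theta - (1 - delta) * thmax \<le> z" "z \<le> theta + (1 - delta) * thmax"
      "- M * y + z * a \<le> w" "w \<le> z * c + M * y"
      "- M * (1 - y) + z * c \<le> w" "w \<le> z * a + M * (1 - y)" by blast
      have "z = theta" using h(3,4) d1 by simp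
      then have "\<exists>y::real. (y = 0 \<or> y = 1)
        \<and> - M * y + theta * a \<le> P - line_b x * theta
        \<and> P - line_b x * theta \<le> theta * c + M * y
        \<and> - M * (1 - y) + theta * c \<le> P - line_b x * theta
        \<and> P - line_b x * theta \<le> theta * a + M * (1 - y)"
        using h by (intro exI[of _ y]) (auto simp: mult.commute)
      then obtain bV where "a \<le> bV" "bV \<le> c" "P - line_b x * theta = bV * theta"
        using core' by blast
      then show "\<exists>bV. a \<le> bV \<and> bV \<le> c \<and> P = (line_b x + delta * bV) * theta"
        using d1 by (intro exI[of _ bV]) (auto simp: algebra_simps)
    qed
  qed
qed

end
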